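(* For real $\alpha<0$ and real $t>1$, \[ \mathbb E\bigl(|\mathcal T|-1+t\bigr)^{\alpha}=(t-1)^{\alpha}\int_0^1\Bigl[1-\frac{c(\eta;-\alpha,t)}{\Gamma(-\alpha)}\Bigr]\,d\eta, \qquad c(\eta;-\alpha,t):=\int_{(t-1)\log R(\eta)}^{\infty}v^{-\alpha-1}e^{-v}\,dv . \]
   Context: Let $\xi$ be a random variable with values in $\{0,1,2,\dots\}$ with $\mathbb E\xi=1$ and $0<\operatorname{Var}\xi<\infty$, with probability generating function $\Phi(t)=\mathbb E t^\xi$, and let $\mathcal T$ be a Galton–Watson tree with offspring distribution $\xi$, $|\mathcal T|$ its number of vertices. For $\eta\in(0,1]$, $R(\eta):=\Phi(\eta)/\eta\in[1,\infty)$. *)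

theory Defs
  imports "HOL-Probability.Probability"
begin

text \<open>Galton--Watson tree in the Ulam--Harris encoding: vertices are finite
sequences of natural numbers; each potential vertex u carries an i.i.d. number
of children omega u with law p (offspring distribution).\<close>

definition gw_space :: "nat pmf \<Rightarrow> (nat list \<Rightarrow> nat) measure" where
  "gw_space p = PiM UNIV (\<lambda>_. measure_pmf p)"

definition gw_tree :: "(nat list \<Rightarrow> nat) \<Rightarrow> nat list set" where
  "gw_tree \<omega> = {u. \<forall>i<length u. u ! i < \<omega> (take i u)}"

definition pgf :: "nat pmf \<Rightarrow> real \<Rightarrow> real" where
  "pgf p \<eta> = measure_pmf.expectation p (\<lambda>k. \<eta> ^ k)"

definition gw_R :: "nat pmf \<Rightarrow> real \<Rightarrow> real" where
  "gw_R p \<eta> = pgf p \<eta> / \<eta>"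

definition gw_c :: "nat pmf \<Rightarrow> real \<Rightarrow> real \<Rightarrow> real \<Rightarrow> real" where
  "gw_c p \<eta> a t = (LBINT v=ereal ((t - 1) * ln (gw_R p \<eta>))..\<infinity>. v powr (a - 1) * exp (- v))"

end

theory Submission
  imports Defs
begin

lemma mem_tree_meas[measurable]: "Measurable.pred (gw_space p) (\<lambda>\<omega>. u \<in> gw_tree \<omega>)"
  unfolding gw_tree_def gw_space_def by simp

definition Nf :: "(nat list \<Rightarrow> nat) \<Rightarrow> nat option" where
  "Nf \<omega> = (if finite (gw_tree \<omega>) then Some (card (gw_tree \<omega>)) else None)"

lemma fin_card_pred: "Measurable.pred (gw_space p) (\<lambda>\<omega>. finite (gw_tree \<omega>) \<and> card (gw_tree \<omega>) = n)"
proof -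
  have cnt: "countable {S::nat list set. finite S \<and> card S = n}"
    by (rule countable_subset[OF _ countable_Collect_finite]) auto
  have eq: "(\<lambda>\<omega>. finite (gw_tree \<omega>) \<and> card (gw_tree \<omega>) = n) =
     (\<lambda>\<omega>. \<exists>S\<in>{S::nat list set. finite S \<and> card S = n}. \<forall>u. (u \<in> gw_tree \<omega>) = (u \<in> S))"
    by (auto simp: fun_eq_iff) (metis set_eqI)+
  show ?thesis unfolding eq
    by (intro measurable_pred_countable[OF cnt] pred_intros_countable) measurable
qed

lemma fin_pred: "Measurable.pred (gw_space p) (\<lambda>\<omega>. finite (gw_tree \<omega>))"
proof -
  have "(\<lambda>\<omega>. finite (gw_tree \<omega>)) = (\<lambda>\<omega>. \<exists>n. finite (gw_tree \<omega>) \<and> card (gw_tree \<omega>) = n)"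
    by auto
  then show ?thesis using fin_card_pred by (simp only:) (intro pred_intros_countable, blast)
qed

lemma Nf_meas: "Nf \<in> gw_space p \<rightarrow>\<^sub>M count_space UNIV"
proof (subst measurable_count_space_eq2_countable, safe)
  fix a :: "nat option"
  show "Nf -` {a} \<inter> space (gw_space p) \<in> sets (gw_space p)"
  proof (cases a)
    case None
    have "Nf -` {a} \<inter> space (gw_space p) = {\<omega>\<in>space (gw_space p). \<not> finite (gw_tree \<omega>)}"
      using None by (auto simp: Nf_def split: if_splits)
    then show ?thesis using fin_pred by (simp add: pred_def)
  next
    case (Some n)
    have "Nf -` {a} \<inter> space (gw_space p) = {\<omega>\<in>space (gw_space p). finite (gw_tree \<omega>) \<and> card (gw_tree \<omega>) = n}"
      using Some by (auto simp: Nf_def split: if_splits)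
    then show ?thesis using fin_card_pred[where p=p and n=n] by (simp add: pred_def)
  qed
qed auto

lemma meas_fin_card:
  fixes G :: "nat \<Rightarrow> 'a \<Rightarrow> real"
  assumes pi: "\<pi> \<in> N \<rightarrow>\<^sub>M gw_space p" and G: "\<And>n. G n \<in> N \<rightarrow>\<^sub>M borel"
  shows "(\<lambda>x. if finite (gw_tree (\<pi> x)) then G (card (gw_tree (\<pi> x))) x else 0) \<in> N \<rightarrow>\<^sub>M borel"
proof -
  define Q where "Q = (\<lambda>z y. case z of None \<Rightarrow> 0 | Some m \<Rightarrow> G m y)"
  have "(\<lambda>x. Q ((Nf \<circ> \<pi>) x) x) \<in> N \<rightarrow>\<^sub>M borel"
  proof (rule measurable_compose_countable)
    fix i show "Q i \<in> N \<rightarrow>\<^sub>M borel" using G by (cases i) (auto simp: Q_def)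
    show "Nf \<circ> \<pi> \<in> N \<rightarrow>\<^sub>M count_space UNIV" using pi Nf_meas by (rule measurable_comp)
  qed
  moreover have "(\<lambda>x. Q ((Nf \<circ> \<pi>) x) x) = (\<lambda>x. if finite (gw_tree (\<pi> x)) then G (card (gw_tree (\<pi> x))) x else 0)"
    by (auto simp: Q_def Nf_def fun_eq_iff)
  ultimately show ?thesis by simp
qed

definition sub :: "nat \<Rightarrow> (nat list \<Rightarrow> nat) \<Rightarrow> (nat list \<Rightarrow> nat)" where
  "sub i \<omega> = (\<lambda>v. \<omega> (i # v))"

lemma tree_decomp:
  "gw_tree \<omega> = insert [] (\<Union>i\<in>{..<\<omega> []}. Cons i ` gw_tree (sub i \<omega>))"
proof (intro set_eqI iffI)
  fix u assume u: "u \<in> gw_tree \<omega>"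
  show "u \<in> insert [] (\<Union>i\<in>{..<\<omega> []}. Cons i ` gw_tree (sub i \<omega>))"
  proof (cases u)
    case (Cons i v)
    have "i < \<omega> []" using u Cons by (auto simp: gw_tree_def)
    moreover have "v \<in> gw_tree (sub i \<omega>)"
    proof -
      { fix j assume "j < length v"
        then have "u ! Suc j < \<omega> (take (Suc j) u)" using u Cons by (auto simp: gw_tree_def)
        then have "v ! j < sub i \<omega> (take j v)" using Cons by (simp add: sub_def) }
      then show ?thesis by (simp add: gw_tree_def)
    qed
    ultimately show ?thesis using Cons by auto
  qed simp
next
  fix u assume "u \<in> insert [] (\<Union>i\<in>{..<\<omega> []}. Cons i ` gw_tree (sub i \<omega>))"
  then show "u \<in> gw_tree \<omega>"
  proof
    assume "u = []" then show ?thesis by (simp add: gw_tree_def)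
  next
    assume "u \<in> (\<Union>i\<in>{..<\<omega> []}. Cons i ` gw_tree (sub i \<omega>))"
    then obtain i v where i: "i < \<omega> []" and v: "v \<in> gw_tree (sub i \<omega>)" and u: "u = i # v" by auto
    show ?thesis unfolding gw_tree_def
    proof safe
      fix j assume "j < length u"
      then show "u ! j < \<omega> (take j u)"
        using i v u by (cases j) (auto simp: gw_tree_def sub_def)
    qed
  qed
qed

definition hx :: "real \<Rightarrow> (nat list \<Rightarrow> nat) \<Rightarrow> real" where
  "hx x \<omega> = (if finite (gw_tree \<omega>) then x ^ card (gw_tree \<omega>) else 0)"

lemma h_decomp: "hx x \<omega> = x * (\<Prod>i<\<omega> []. hx x (sub i \<omega>))"
proof -
  define U where "U = (\<Union>i\<in>{..<\<omega> []}. Cons i ` gw_tree (sub i \<omega>))"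
  have T: "gw_tree \<omega> = insert [] U" unfolding U_def by (rule tree_decomp)
  have nU: "[] \<notin> U" unfolding U_def by auto
  have fin_iff: "finite (gw_tree \<omega>) \<longleftrightarrow> (\<forall>i<\<omega> []. finite (gw_tree (sub i \<omega>)))"
  proof -
    have "finite U \<longleftrightarrow> (\<forall>i\<in>{..<\<omega> []}. finite (Cons i ` gw_tree (sub i \<omega>)))"
      unfolding U_def by (rule finite_UN) simp
    also have "\<dots> \<longleftrightarrow> (\<forall>i<\<omega> []. finite (gw_tree (sub i \<omega>)))"
      by (simp add: finite_image_iff) blast
    finally show ?thesis using T by simp
  qed
  show ?thesis
  proof (cases "finite (gw_tree \<omega>)")
    case True
    then have fi: "\<And>i. i < \<omega> [] \<Longrightarrow> finite (gw_tree (sub i \<omega>))" using fin_iff by auto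
    have "card U = (\<Sum>i<\<omega> []. card (Cons i ` gw_tree (sub i \<omega>)))"
      unfolding U_def by (rule card_UN_disjoint) (auto simp: fi)
    also have "\<dots> = (\<Sum>i<\<omega> []. card (gw_tree (sub i \<omega>)))"
      by (simp add: card_image)
    finally have cU: "card U = (\<Sum>i<\<omega> []. card (gw_tree (sub i \<omega>)))" .
    have "card (gw_tree \<omega>) = Suc (card U)" using T nU True by simp
    then have "hx x \<omega> = x * x ^ (\<Sum>i<\<omega> []. card (gw_tree (sub i \<omega>)))"
      using True cU by (simp add: hx_def)
    also have "\<dots> = x * (\<Prod>i<\<omega> []. hx x (sub i \<omega>))"
      by (simp add: power_sum hx_def fi)
    finally show ?thesis .
  next
    case False
    then obtain i where "i < \<omega> []" "\<not> finite (gw_tree (sub i \<omega>))" using fin_iff by auto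
    then have "(\<Prod>i<\<omega> []. hx x (sub i \<omega>)) = 0"
      by (intro prod_zero) (auto simp: hx_def intro!: bexI[of _ i])
    then show ?thesis using False by (simp add: hx_def)
  qed
qed

lemma prob_gw: "prob_space (gw_space p)"
  unfolding gw_space_def by (intro prob_space_PiM prob_space_measure_pmf)

lemma space_gw: "space (gw_space p) = UNIV"
  unfolding gw_space_def by (simp add: space_PiM)

lemma coord_indep: "prob_space.indep_vars (gw_space p) (\<lambda>_. measure_pmf p) (\<lambda>u \<omega>. \<omega> u) UNIV"
proof -
  interpret prob_space "gw_space p" by (rule prob_gw)
  have "distr (gw_space p) (\<Pi>\<^sub>M i\<in>UNIV. measure_pmf p) (\<lambda>x. \<lambda>i\<in>UNIV. x i) = gw_space p"
    unfolding gw_space_def by (simp add: restrict_UNIV distr_id[unfolded id_def])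
  also have "\<dots> = (\<Pi>\<^sub>M i\<in>UNIV. distr (gw_space p) (measure_pmf p) (\<lambda>x. x i))"
    unfolding gw_space_def
    by (intro PiM_cong refl distr_PiM_component[symmetric] prob_space_measure_pmf) auto
  finally show ?thesis
    by (subst indep_vars_iff_distr_eq_PiM) (auto simp: gw_space_def)
qed

lemma sub_meas[measurable]: "sub i \<in> gw_space p \<rightarrow>\<^sub>M gw_space p"
  unfolding sub_def gw_space_def
  by (rule measurable_PiM_single') (auto simp: space_PiM)

lemma sub_distr: "distr (gw_space p) (gw_space p) (sub i) = gw_space p"
proof -
  have "distr (Pi\<^sub>M UNIV (\<lambda>_. measure_pmf p)) (\<Pi>\<^sub>M n\<in>UNIV. measure_pmf p) (\<lambda>\<omega>. \<lambda>n\<in>UNIV. \<omega> (i # n))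
        = (\<Pi>\<^sub>M n\<in>UNIV. measure_pmf p)"
    by (rule distr_PiM_reindex[where f="Cons i"]) (auto simp: prob_space_measure_pmf)
  then show ?thesis unfolding gw_space_def sub_def by (simp add: restrict_UNIV)
qed

lemma hx_meas[measurable]: "hx x \<in> gw_space p \<rightarrow>\<^sub>M borel"
proof -
  have "(\<lambda>\<omega>. if finite (gw_tree ((\<lambda>\<omega>. \<omega>) \<omega>)) then (\<lambda>n \<omega>. x ^ n) (card (gw_tree ((\<lambda>\<omega>. \<omega>) \<omega>))) \<omega> else 0) \<in> gw_space p \<rightarrow>\<^sub>M borel"
    by (rule meas_fin_card[where p=p]) auto
  then show ?thesis by (simp add: hx_def[abs_def])
qed

lemma nn_sub: "(\<integral>\<^sup>+\<omega>. ennreal (hx x (sub i \<omega>)) \<partial>gw_space p) = (\<integral>\<^sup>+\<omega>. ennreal (hx x \<omega>) \<partial>gw_space p)"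
proof -
  have "(\<integral>\<^sup>+\<omega>. ennreal (hx x \<omega>) \<partial>distr (gw_space p) (gw_space p) (sub i)) = (\<integral>\<^sup>+\<omega>. ennreal (hx x (sub i \<omega>)) \<partial>gw_space p)"
    by (rule nn_integral_distr) auto
  then show ?thesis by (simp add: sub_distr)
qed

lemma nn_root: "(\<integral>\<^sup>+\<omega>. ennreal (indicator {k} (\<omega> [])) \<partial>gw_space p) = ennreal (pmf p k)"
proof -
  have "distr (gw_space p) (measure_pmf p) (\<lambda>\<omega>. \<omega> []) = measure_pmf p"
    unfolding gw_space_def by (intro distr_PiM_component prob_space_measure_pmf) auto
  moreover have "(\<integral>\<^sup>+j. ennreal (indicator {k} j) \<partial>distr (gw_space p) (measure_pmf p) (\<lambda>\<omega>. \<omega> [])) =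
     (\<integral>\<^sup>+\<omega>. ennreal (indicator {k} (\<omega> [])) \<partial>gw_space p)"
    by (rule nn_integral_distr) (auto simp: gw_space_def)
  ultimately show ?thesis by (simp add: emeasure_pmf_single ennreal_indicator)
qed

lemma hx_nonneg: "0 \<le> x \<Longrightarrow> 0 \<le> hx x \<omega>"
  by (simp add: hx_def)

lemma hx_le1: "0 \<le> x \<Longrightarrow> x \<le> 1 \<Longrightarrow> hx x \<omega> \<le> 1"
  by (simp add: hx_def power_le_one)

lemma indep_prod:
  assumes x: "0 \<le> x"
  shows "(\<integral>\<^sup>+\<omega>. ennreal (indicator {k} (\<omega> []) * (\<Prod>i<k. hx x (sub i \<omega>))) \<partial>gw_space p)
     = ennreal (pmf p k) * (\<integral>\<^sup>+\<omega>. ennreal (hx x \<omega>) \<partial>gw_space p) ^ k"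
proof -
  interpret prob_space "gw_space p" by (rule prob_gw)
  define K :: "nat option \<Rightarrow> nat list set" where "K = (\<lambda>j. case j of None \<Rightarrow> {[]} | Some i \<Rightarrow> range (Cons i))"
  define g where "g = (\<lambda>j (z::nat list \<Rightarrow> nat). case j of None \<Rightarrow> indicator {k} (z []) | Some i \<Rightarrow> hx x (\<lambda>v. z (i # v)))"
  have ind1: "indep_vars (\<lambda>j. PiM (K j) (\<lambda>_. measure_pmf p)) (\<lambda>j \<omega>. restrict (\<lambda>u. \<omega> u) (K j)) UNIV"
    by (rule indep_vars_restrict[OF coord_indep]) (auto simp: K_def disjoint_family_on_def split: option.splits)
  have gm: "g j \<in> PiM (K j) (\<lambda>_. measure_pmf p) \<rightarrow>\<^sub>M borel" for j
  proof (cases j)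
    case None
    have "(\<lambda>z. indicator {k} (z []) :: real) \<in> PiM {[]} (\<lambda>_. measure_pmf p) \<rightarrow>\<^sub>M borel"
      by (rule measurable_compose[OF measurable_component_singleton, where g="\<lambda>z. indicator {k} z"]) auto
    then show ?thesis by (simp add: g_def K_def None)
  next
    case (Some i)
    have "(\<lambda>z v. z (i # v)) \<in> PiM (K j) (\<lambda>_. measure_pmf p) \<rightarrow>\<^sub>M gw_space p"
      unfolding gw_space_def
      by (rule measurable_PiM_single') (auto simp: K_def Some space_PiM)
    then show ?thesis using Some by (simp add: g_def)
  qed
  have gm': "(\<lambda>z. ennreal (g j z)) \<in> PiM (K j) (\<lambda>_. measure_pmf p) \<rightarrow>\<^sub>M borel" for j
    using gm[of j] by measurable
  have ind2: "indep_vars (\<lambda>_. borel) (\<lambda>j \<omega>. ennreal (g j (restrict (\<lambda>u. \<omega> u) (K j)))) UNIV"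
    by (rule indep_vars_compose2[OF ind1 gm'])
  define L where "L = insert None (Some ` {..<k})"
  have finL: "finite L" by (simp add: L_def)
  have ind3: "indep_vars (\<lambda>_. borel) (\<lambda>j \<omega>. ennreal (g j (restrict (\<lambda>u. \<omega> u) (K j)))) L"
    by (rule indep_vars_subset[OF ind2]) auto
  have nonneg: "0 \<le> g j z" for j z using x by (cases j) (auto simp: g_def hx_def)
  have Y_None: "g None (restrict (\<lambda>u. \<omega> u) (K None)) = indicator {k} (\<omega> [])" for \<omega>
    by (simp add: g_def K_def)
  have Y_Some: "g (Some i) (restrict (\<lambda>u. \<omega> u) (K (Some i))) = hx x (sub i \<omega>)" for \<omega> i
    by (simp add: g_def K_def sub_def)
  have prodL: "(\<Prod>j\<in>L. G j) = G None * (\<Prod>i<k. G (Some i))" for G :: "nat option \<Rightarrow> 'z::comm_monoid_mult"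
    unfolding L_def by (subst prod.insert) (auto simp: prod.reindex)
  have "(\<integral>\<^sup>+\<omega>. ennreal (indicator {k} (\<omega> []) * (\<Prod>i<k. hx x (sub i \<omega>))) \<partial>gw_space p)
      = (\<integral>\<^sup>+\<omega>. (\<Prod>j\<in>L. ennreal (g j (restrict (\<lambda>u. \<omega> u) (K j)))) \<partial>gw_space p)"
    by (simp add: prod_ennreal nonneg prodL Y_None Y_Some hx_nonneg[OF x] ennreal_mult' prod_nonneg)
  also have "\<dots> = (\<Prod>j\<in>L. \<integral>\<^sup>+\<omega>. ennreal (g j (restrict (\<lambda>u. \<omega> u) (K j))) \<partial>gw_space p)"
    by (rule indep_vars_nn_integral[OF finL ind3]) simp
  also have "\<dots> = ennreal (pmf p k) * (\<integral>\<^sup>+\<omega>. ennreal (hx x \<omega>) \<partial>gw_space p) ^ k"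
    by (simp add: prodL Y_None Y_Some nn_root nn_sub)
  finally show ?thesis .
qed

lemma root_meas[measurable]: "(\<lambda>\<omega>. \<omega> []) \<in> gw_space p \<rightarrow>\<^sub>M count_space UNIV"
proof -
  have "(\<lambda>\<omega>. \<omega> []) \<in> gw_space p \<rightarrow>\<^sub>M measure_pmf p"
    unfolding gw_space_def by (rule measurable_component_singleton) simp
  then show ?thesis by (simp add: measurable_def)
qed

lemma F_eq_nn:
  assumes x: "0 \<le> x"
  shows "(\<integral>\<^sup>+\<omega>. ennreal (hx x \<omega>) \<partial>gw_space p)
     = ennreal x * (\<integral>\<^sup>+k. (\<integral>\<^sup>+\<omega>. ennreal (hx x \<omega>) \<partial>gw_space p) ^ k \<partial>measure_pmf p)"
proof -
  define T where "T = (\<lambda>k \<omega>. ennreal (indicator {k} (\<omega> []) * (\<Prod>i<k. hx x (sub i \<omega>))))"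
  have Tm: "T k \<in> borel_measurable (gw_space p)" for k
  proof -
    have "(\<lambda>\<omega>. indicator {k} (\<omega> []) :: real) \<in> borel_measurable (gw_space p)"
      by (rule measurable_compose[OF root_meas, where g="indicator {k}"]) simp
    moreover have "(\<lambda>\<omega>. \<Prod>i<k. hx x (sub i \<omega>)) \<in> borel_measurable (gw_space p)"
      by (intro borel_measurable_prod measurable_compose[OF sub_meas hx_meas])
    ultimately show ?thesis unfolding T_def by measurable
  qed
  have pt: "ennreal (hx x \<omega>) = ennreal x * (\<Sum>k. T k \<omega>)" for \<omega>
  proof -
    have "(\<lambda>k. T k \<omega>) = (\<lambda>k. if k = \<omega> [] then ennreal (\<Prod>i<k. hx x (sub i \<omega>)) else 0)"
      by (auto simp: T_def fun_eq_iff)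
    then have "(\<Sum>k. T k \<omega>) = ennreal (\<Prod>i<\<omega> []. hx x (sub i \<omega>))"
      using sums_single[of "\<omega> []" "\<lambda>k. ennreal (\<Prod>i<k. hx x (sub i \<omega>))"] by (simp add: sums_iff)
    then show ?thesis
      by (subst h_decomp) (simp add: ennreal_mult' x)
  qed
  have "(\<integral>\<^sup>+\<omega>. ennreal (hx x \<omega>) \<partial>gw_space p) = ennreal x * (\<integral>\<^sup>+\<omega>. (\<Sum>k. T k \<omega>) \<partial>gw_space p)"
  proof -
    have "(\<lambda>\<omega>. \<Sum>k. T k \<omega>) \<in> borel_measurable (gw_space p)"
      using Tm by (rule borel_measurable_suminf_order)
    then show ?thesis by (simp add: pt nn_integral_cmult)
  qed
  also have "(\<integral>\<^sup>+\<omega>. (\<Sum>k. T k \<omega>) \<partial>gw_space p) = (\<Sum>k. \<integral>\<^sup>+\<omega>. T k \<omega> \<partial>gw_space p)"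
    by (rule nn_integral_suminf[OF Tm])
  also have "\<dots> = (\<Sum>k. ennreal (pmf p k) * (\<integral>\<^sup>+\<omega>. ennreal (hx x \<omega>) \<partial>gw_space p) ^ k)"
    unfolding T_def by (simp add: indep_prod[OF x])
  also have "\<dots> = (\<integral>\<^sup>+k. (\<integral>\<^sup>+\<omega>. ennreal (hx x \<omega>) \<partial>gw_space p) ^ k \<partial>measure_pmf p)"
    by (simp only: nn_integral_measure_pmf nn_integral_count_space_nat)
  finally show ?thesis .
qed

definition Fr :: "nat pmf \<Rightarrow> real \<Rightarrow> real" where
  "Fr p x = enn2real (\<integral>\<^sup>+\<omega>. ennreal (hx x \<omega>) \<partial>gw_space p)"

lemma nn_hx_le1:
  assumes "0 \<le> x" "x \<le> 1"
  shows "(\<integral>\<^sup>+\<omega>. ennreal (hx x \<omega>) \<partial>gw_space p) \<le> 1"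
proof -
  interpret prob_space "gw_space p" by (rule prob_gw)
  have "(\<integral>\<^sup>+\<omega>. ennreal (hx x \<omega>) \<partial>gw_space p) \<le> (\<integral>\<^sup>+\<omega>. 1 \<partial>gw_space p)"
    by (rule nn_integral_mono) (simp add: hx_le1 assms)
  then show ?thesis by (simp add: emeasure_space_1)
qed

lemma Fr_nn:
  assumes "0 \<le> x" "x \<le> 1"
  shows "(\<integral>\<^sup>+\<omega>. ennreal (hx x \<omega>) \<partial>gw_space p) = ennreal (Fr p x)"
proof -
  have "(\<integral>\<^sup>+\<omega>. ennreal (hx x \<omega>) \<partial>gw_space p) \<noteq> top"
    using nn_hx_le1[OF assms, of p] by (metis ennreal_one_less_top leD top_greatest order.strict_iff_not)
  then show ?thesis unfolding Fr_def by (simp add: ennreal_enn2real_if)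
qed

lemma Fr_bounds:
  assumes "0 \<le> x" "x \<le> 1"
  shows "0 \<le> Fr p x" "Fr p x \<le> 1"
proof -
  show "0 \<le> Fr p x" unfolding Fr_def by (rule enn2real_nonneg)
  have "ennreal (Fr p x) \<le> 1" using nn_hx_le1[OF assms, of p] Fr_nn[OF assms, of p] by simp
  then show "Fr p x \<le> 1" by (simp add: ennreal_le_1)
qed

lemma pgf_nn:
  assumes "0 \<le> y" "y \<le> 1"
  shows "(\<integral>\<^sup>+k. ennreal (y ^ k) \<partial>measure_pmf p) = ennreal (pgf p y)"
proof -
  interpret measure_pmf: prob_space "measure_pmf p" by (rule prob_space_measure_pmf)
  have le: "(\<integral>\<^sup>+k. ennreal (y ^ k) \<partial>measure_pmf p) \<le> 1"
  proof -
    have "(\<integral>\<^sup>+k. ennreal (y ^ k) \<partial>measure_pmf p) \<le> (\<integral>\<^sup>+k. 1 \<partial>measure_pmf p)"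
      by (rule nn_integral_mono) (simp add: power_le_one assms)
    then show ?thesis by (simp add: measure_pmf.emeasure_space_1)
  qed
  then have "(\<integral>\<^sup>+k. ennreal (y ^ k) \<partial>measure_pmf p) \<noteq> top"
    by (metis ennreal_one_less_top leD top_greatest order.strict_iff_not)
  moreover have "pgf p y = enn2real (\<integral>\<^sup>+k. ennreal (y ^ k) \<partial>measure_pmf p)"
    unfolding pgf_def by (rule integral_eq_nn_integral) (auto simp: assms)
  ultimately show ?thesis by (simp add: ennreal_enn2real_if)
qed

lemma F_fix:
  assumes "0 \<le> x" "x \<le> 1"
  shows "Fr p x = x * pgf p (Fr p x)"
proof -
  have "ennreal (Fr p x) = ennreal x * (\<integral>\<^sup>+k. ennreal (Fr p x) ^ k \<partial>measure_pmf p)"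
    using F_eq_nn[OF assms(1), of p] by (simp add: Fr_nn[OF assms])
  also have "\<dots> = ennreal x * ennreal (pgf p (Fr p x))"
    using Fr_bounds[OF assms, of p] by (simp add: ennreal_power pgf_nn)
  also have "\<dots> = ennreal (x * pgf p (Fr p x))" by (simp add: ennreal_mult' assms)
  finally show ?thesis
    using Fr_bounds[OF assms, of p] assms
    by (subst (asm) ennreal_inj) (auto intro!: mult_nonneg_nonneg simp: pgf_def)
qed

lemma pgf_integrable: "0 \<le> (y::real) \<Longrightarrow> y \<le> 1 \<Longrightarrow> integrable (measure_pmf p) (\<lambda>k::nat. y ^ k)"
proof -
  assume y: "0 \<le> y" "y \<le> 1"
  show ?thesis 
  proof (rule measure_pmf.integrable_const_bound[where B=1])
    show "AE x in measure_pmf p. norm (y ^ x) \<le> 1"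
      by (intro AE_I2) (simp add: power_le_one y abs_of_nonneg)
  qed simp
qed

lemma pow_convex:
  fixes a b l :: real
  assumes "0 \<le> a" "0 \<le> b" "0 \<le> l" "l \<le> 1"
  shows "((1 - l) * a + l * b) ^ k \<le> (1 - l) * a ^ k + l * b ^ k"
proof -
  have "convex_on {0..} (\<lambda>x::real. x ^ k)"
  proof (cases "even k")
    case True then show ?thesis using convex_power_even convex_on_subset by blast
  next
    case False then show ?thesis using convex_power_odd by blast
  qed
  from convex_onD[OF this, of l a b] assms show ?thesis by simp
qed

lemma pgf_convex:
  fixes a b l :: real
  assumes "0 \<le> a" "a \<le> 1" "0 \<le> b" "b \<le> 1" "0 \<le> l" "l \<le> 1"
  shows "pgf p ((1 - l) * a + l * b) \<le> (1 - l) * pgf p a + l * pgf p b"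
proof -
  have c: "0 \<le> (1 - l) * a + l * b" "(1 - l) * a + l * b \<le> 1"
    using assms by (auto intro!: add_nonneg_nonneg mult_nonneg_nonneg convex_bound_le)
  have "pgf p ((1 - l) * a + l * b) \<le> measure_pmf.expectation p (\<lambda>k. (1 - l) * a ^ k + l * b ^ k)"
    unfolding pgf_def
    by (rule integral_mono) (auto intro!: pgf_integrable c assms pow_convex)
  also have "\<dots> = (1 - l) * pgf p a + l * pgf p b"
    unfolding pgf_def using assms by (simp add: pgf_integrable)
  finally show ?thesis .
qed

lemma pgf_one: "pgf p 1 = 1"
  by (simp add: pgf_def)

lemma pgf_zero: "pgf p 0 = pmf p 0"
proof -
  have "(\<lambda>k::nat. (0::real) ^ k) = indicator {0}"
    by (auto simp: fun_eq_iff indicator_def)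
  then show ?thesis by (simp add: pgf_def measure_pmf_single)
qed

lemma p0_pos:
  assumes "integrable (measure_pmf p) real"
    and "measure_pmf.expectation p real = 1"
    and "measure_pmf.variance p real > 0"
  shows "pmf p 0 > 0"
proof (rule ccontr)
  assume "\<not> pmf p 0 > 0"
  then have "pmf p 0 = 0" using pmf_nonneg[of p 0] by linarith
  have "1 \<le> real k" if "k \<in> set_pmf p" for k
  proof -
    have "k \<noteq> 0"
    proof
      assume "k = 0"
      with that \<open>pmf p 0 = 0\<close> show False by (simp add: set_pmf_iff)
    qed
    then show ?thesis by simp
  qed
  then have ge1: "AE k in measure_pmf p. 1 \<le> real k"
    by (simp add: AE_measure_pmf_iff)
  have int1: "integrable (measure_pmf p) (\<lambda>k. real k - 1)"
    using assms(1) by simp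
  have "measure_pmf.expectation p (\<lambda>k. real k - 1) = 0"
    using assms(1,2) by (simp add: Bochner_Integration.integral_diff)
  moreover have nn: "AE k in measure_pmf p. 0 \<le> real k - 1"
    using ge1 by eventually_elim simp
  ultimately have "AE k in measure_pmf p. real k - 1 = 0"
    using integral_nonneg_eq_0_iff_AE[OF int1 nn] by simp
  then have "AE k in measure_pmf p. (real k - measure_pmf.expectation p real)\<^sup>2 = 0"
    by eventually_elim (simp add: assms(2))
  then have "measure_pmf.variance p real = 0"
    by (rule integral_eq_zero_AE)
  with assms(3) show False by simp
qed

lemma pgf_ge:
  assumes "integrable (measure_pmf p) real"
    and "measure_pmf.expectation p real = 1"
    and "0 \<le> y" "y \<le> 1"
  shows "y \<le> pgf p y"
proof -
  have "measure_pmf.expectation p (\<lambda>k. 1 + real k * (y - 1)) \<le> pgf p y"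
    unfolding pgf_def
  proof (rule integral_mono)
    show "integrable (measure_pmf p) (\<lambda>k. 1 + real k * (y - 1))"
      using assms(1) by simp
    show "integrable (measure_pmf p) (\<lambda>k. y ^ k)" by (rule pgf_integrable) fact+
    fix k :: nat
    show "1 + real k * (y - 1) \<le> y ^ k"
      using Bernoulli_inequality[of "y - 1" k] assms by simp
  qed
  moreover have "measure_pmf.expectation p (\<lambda>k. 1 + real k * (y - 1)) = y"
    using assms(1,2) by (simp add: Bochner_Integration.integral_add)
  ultimately show ?thesis by simp
qed

lemma root_set:
  assumes A1: "integrable (measure_pmf p) real"
    and A2: "measure_pmf.expectation p real = 1"
    and A3: "measure_pmf.variance p real > 0"
    and x: "0 < x" "x < 1"
  shows "{\<eta>\<in>{0<..1}. \<eta> < x * pgf p \<eta>} = {0<..<Fr p x}"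
proof -
  define F where "F = Fr p x"
  have Ffix: "F = x * pgf p F" unfolding F_def using x by (intro F_fix) auto
  have F01: "0 \<le> F" "F \<le> 1" unfolding F_def using x Fr_bounds[of x p] by auto
  have p0: "pmf p 0 > 0" by (rule p0_pos[OF A1 A2 A3])
  have "F \<noteq> 0"
  proof
    assume "F = 0"
    with Ffix have "0 = x * pmf p 0" by (simp add: pgf_zero)
    with p0 x show False by simp
  qed
  with F01 have Fpos: "0 < F" by simp
  have "F \<noteq> 1"
  proof
    assume "F = 1"
    with Ffix have "1 = x" by (simp add: pgf_one)
    with x show False by simp
  qed
  with F01 have Flt1: "F < 1" by simp
  define g where "g = (\<lambda>\<eta>. x * pgf p \<eta> - \<eta>)"
  have gF: "g F = 0" unfolding g_def using Ffix by simp
  have g1: "g 1 = x - 1" unfolding g_def by (simp add: pgf_one)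
  have gconv: "g ((1 - l) * a + l * b) \<le> (1 - l) * g a + l * g b"
    if "0 \<le> a" "a \<le> 1" "0 \<le> b" "b \<le> 1" "0 \<le> l" "l \<le> 1" for a b l
  proof -
    have "x * pgf p ((1 - l) * a + l * b) \<le> x * ((1 - l) * pgf p a + l * pgf p b)"
      using pgf_convex[OF that, of p] x by (intro mult_left_mono) auto
    then show ?thesis unfolding g_def by (simp add: algebra_simps)
  qed
  have key: "\<eta> < x * pgf p \<eta> \<longleftrightarrow> \<eta> < F" if eta: "0 < \<eta>" "\<eta> \<le> 1" for \<eta>
  proof (cases "\<eta> < F")
    case True
    define l where "l = (F - \<eta>) / (1 - \<eta>)"
    have d: "0 < 1 - \<eta>" using True Flt1 by simp
    have l: "0 < l" "l < 1" using True Flt1 d unfolding l_def by (simp_all add: divide_less_eq)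
    have e: "l * (1 - \<eta>) = F - \<eta>" unfolding l_def using True Flt1 by simp
    have comb: "(1 - l) * \<eta> + l * 1 = F" using e by (simp add: algebra_simps)
    have "g F \<le> (1 - l) * g \<eta> + l * g 1"
      using gconv[of \<eta> 1 l] eta l comb by simp
    moreover have "l * (x - 1) < 0" using l x by (simp add: mult_pos_neg)
    ultimately have "0 < (1 - l) * g \<eta>" using gF g1 by simp
    then have "0 < g \<eta>" using l by (simp add: zero_less_mult_iff)
    then show ?thesis using True unfolding g_def by simp
  next
    case False
    show ?thesis
    proof (cases "\<eta> = F")
      case True
      then show ?thesis using gF unfolding g_def by simp
    next
      case False2: False
      with False have gt: "F < \<eta>" by simp
      define l where "l = (\<eta> - F) / (1 - F)"
      have d: "0 < 1 - F" using Flt1 by simp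
      have l: "0 < l" "l \<le> 1" using gt eta d unfolding l_def by (simp_all add: divide_le_eq)
      have e: "l * (1 - F) = \<eta> - F" unfolding l_def using gt Flt1 by simp
      have comb: "(1 - l) * F + l * 1 = \<eta>" using e by (simp add: algebra_simps)
      have "g \<eta> \<le> (1 - l) * g F + l * g 1"
        using gconv[of F 1 l] F01 l comb by simp
      moreover have "l * (x - 1) < 0" using l x by (simp add: mult_pos_neg)
      ultimately have "g \<eta> < 0" using gF g1 by simp
      then show ?thesis using gt unfolding g_def by simp
    qed
  qed
  show ?thesis
  proof (intro set_eqI iffI)
    fix \<eta> assume "\<eta> \<in> {\<eta> \<in> {0<..1}. \<eta> < x * pgf p \<eta>}"
    then show "\<eta> \<in> {0<..<Fr p x}" using key[of \<eta>] by (simp add: F_def)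
  next
    fix \<eta> assume "\<eta> \<in> {0<..<Fr p x}"
    then show "\<eta> \<in> {\<eta> \<in> {0<..1}. \<eta> < x * pgf p \<eta>}" using key[of \<eta>] Flt1 by (simp add: F_def)
  qed
qed

definition fA :: "real \<Rightarrow> real \<Rightarrow> real" where
  "fA a v = v powr (a - 1) * exp (- v)"

lemma fA_nonneg: "0 \<le> fA a v" by (simp add: fA_def)

lemma fA_meas[measurable]: "fA a \<in> borel_measurable borel"
  unfolding fA_def by measurable

lemma Gam_nn:
  assumes a: "0 < a"
  shows "(\<integral>\<^sup>+v. ennreal (indicator {0<..} v * fA a v) \<partial>lborel) = ennreal (Gamma a)"
proof -
  have hi: "((\<lambda>t. t powr (a - 1) / exp t) has_integral Gamma a) {0..}"
    by (rule Gamma_integral_real[OF a])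
  have "(\<integral>\<^sup>+v. ennreal (indicator {0..} v * (v powr (a - 1) / exp v)) \<partial>lborel) = ennreal (Gamma a)"
    by (rule nn_integral_has_integral_lebesgue[OF _ hi]) simp
  moreover have "indicator {0..} v * (v powr (a - 1) / exp v) = indicator {0<..} v * fA a v" for v :: real
    by (cases "v = 0") (auto simp: fA_def indicator_def exp_minus field_simps)
  ultimately show ?thesis by simp
qed

lemma scale_nn:
  fixes \<phi> :: "real \<Rightarrow> real"
  assumes y: "0 < y" and [measurable]: "\<phi> \<in> borel_measurable borel"
  shows "(\<integral>\<^sup>+s. ennreal (\<phi> (y * s)) \<partial>lborel) = ennreal (1 / y) * (\<integral>\<^sup>+v. ennreal (\<phi> v) \<partial>lborel)"
proof -
  have "(\<integral>\<^sup>+v. ennreal (\<phi> v) \<partial>lborel) = ennreal \<bar>y\<bar> * (\<integral>\<^sup>+s. ennreal (\<phi> (0 + y * s)) \<partial>lborel)"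
    by (rule nn_integral_real_affine) (use y in auto)
  then have "ennreal (1 / y) * (\<integral>\<^sup>+v. ennreal (\<phi> v) \<partial>lborel)
      = (ennreal (1 / y) * ennreal y) * (\<integral>\<^sup>+s. ennreal (\<phi> (y * s)) \<partial>lborel)"
    using y by (simp add: mult.assoc)
  also have "ennreal (1 / y) * ennreal y = 1"
    using y by (simp add: ennreal_mult''[symmetric])
  finally show ?thesis by simp
qed

lemma Gam_scale:
  assumes a: "0 < a" and y: "0 < y"
  shows "(\<integral>\<^sup>+s. ennreal (indicator {0<..} s * (s powr (a - 1) * exp (- (y * s)))) \<partial>lborel)
         = ennreal (Gamma a * y powr (- a))"
proof -
  let ?\<phi> = "\<lambda>v. indicator {0<..} v * fA a v"
  have "?\<phi> (y * s) = y powr (a - 1) * (indicator {0<..} s * (s powr (a - 1) * exp (- (y * s))))" for s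
    using y by (auto simp: fA_def indicator_def powr_mult zero_less_mult_iff)
  then have "(\<integral>\<^sup>+s. ennreal (?\<phi> (y * s)) \<partial>lborel)
      = ennreal (y powr (a - 1)) * (\<integral>\<^sup>+s. ennreal (indicator {0<..} s * (s powr (a - 1) * exp (- (y * s)))) \<partial>lborel)"
    by (simp add: ennreal_mult' nn_integral_cmult)
  moreover have "(\<integral>\<^sup>+s. ennreal (?\<phi> (y * s)) \<partial>lborel) = ennreal (1 / y) * ennreal (Gamma a)"
    using scale_nn[OF y, of ?\<phi>] Gam_nn[OF a] by simp
  moreover have "ennreal (1 / y) * ennreal (Gamma a) = ennreal (1 / y * Gamma a)"
    by (rule ennreal_mult''[symmetric]) (use y a Gamma_real_pos[of a] in simp)
  ultimately have eq: "ennreal (y powr (a - 1)) * (\<integral>\<^sup>+s. ennreal (indicator {0<..} s * (s powr (a - 1) * exp (- (y * s)))) \<partial>lborel)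
      = ennreal (1 / y * Gamma a)"
    by simp
  have "ennreal (y powr (1 - a)) * ennreal (y powr (a - 1)) = 1"
    using y by (simp add: ennreal_mult''[symmetric] powr_add[symmetric])
  then have "ennreal (y powr (1 - a)) * ennreal (1 / y * Gamma a) = (\<integral>\<^sup>+s. ennreal (indicator {0<..} s * (s powr (a - 1) * exp (- (y * s)))) \<partial>lborel)"
    unfolding eq[symmetric] mult.assoc[symmetric] by simp
  then have "(\<integral>\<^sup>+s. ennreal (indicator {0<..} s * (s powr (a - 1) * exp (- (y * s)))) \<partial>lborel)
      = ennreal (y powr (1 - a)) * ennreal (1 / y * Gamma a)" by simp
  also have "\<dots> = ennreal (Gamma a * y powr (- a))"
    using y a by (simp add: ennreal_mult''[symmetric] powr_diff powr_minus field_simps Gamma_real_pos)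
  finally show ?thesis .
qed

lemma scale_pow:
  fixes \<phi> \<psi> :: "real \<Rightarrow> real"
  assumes y: "0 < y" and [measurable]: "\<phi> \<in> borel_measurable borel"
    and [measurable]: "\<psi> \<in> borel_measurable borel"
    and eq: "\<And>s. \<phi> (y * s) = y powr (a - 1) * \<psi> s"
  shows "(\<integral>\<^sup>+s. ennreal (\<psi> s) \<partial>lborel) = ennreal (y powr (- a)) * (\<integral>\<^sup>+v. ennreal (\<phi> v) \<partial>lborel)"
proof -
  have "(\<integral>\<^sup>+s. ennreal (\<phi> (y * s)) \<partial>lborel) = ennreal (y powr (a - 1)) * (\<integral>\<^sup>+s. ennreal (\<psi> s) \<partial>lborel)"
    by (simp add: eq ennreal_mult' nn_integral_cmult)
  then have e2: "ennreal (y powr (a - 1)) * (\<integral>\<^sup>+s. ennreal (\<psi> s) \<partial>lborel) = ennreal (1 / y) * (\<integral>\<^sup>+v. ennreal (\<phi> v) \<partial>lborel)"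
    using scale_nn[OF y assms(2)] by simp
  have one: "ennreal (y powr (1 - a)) * ennreal (y powr (a - 1)) = 1"
    using y by (simp add: ennreal_mult''[symmetric] powr_add[symmetric])
  have "(\<integral>\<^sup>+s. ennreal (\<psi> s) \<partial>lborel) = ennreal (y powr (1 - a)) * (ennreal (y powr (a - 1)) * (\<integral>\<^sup>+s. ennreal (\<psi> s) \<partial>lborel))"
    unfolding mult.assoc[symmetric] one by simp
  also have "\<dots> = (ennreal (y powr (1 - a)) * ennreal (1 / y)) * (\<integral>\<^sup>+v. ennreal (\<phi> v) \<partial>lborel)"
    unfolding e2 by (simp add: mult.assoc)
  also have "ennreal (y powr (1 - a)) * ennreal (1 / y) = ennreal (y powr (- a))"
    using y by (simp add: ennreal_mult''[symmetric] powr_diff powr_minus field_simps)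
  finally show ?thesis .
qed

definition gl :: "real \<Rightarrow> real \<Rightarrow> real" where
  "gl a z = enn2real (\<integral>\<^sup>+v. ennreal (indicator {0<..z} v * fA a v) \<partial>lborel)"

lemma gl_nonneg: "0 \<le> gl a z"
  unfolding gl_def by (rule enn2real_nonneg)

lemma gl_nn_le:
  assumes a: "0 < a"
  shows "(\<integral>\<^sup>+v. ennreal (indicator {0<..z} v * fA a v) \<partial>lborel) \<le> ennreal (Gamma a)"
proof -
  have "(\<integral>\<^sup>+v. ennreal (indicator {0<..z} v * fA a v) \<partial>lborel) \<le> (\<integral>\<^sup>+v. ennreal (indicator {0<..} v * fA a v) \<partial>lborel)"
    by (intro nn_integral_mono ennreal_leI mult_right_mono) (auto simp: indicator_def fA_nonneg)
  then show ?thesis using Gam_nn[OF a] by simp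
qed

lemma gl_nn:
  assumes a: "0 < a"
  shows "(\<integral>\<^sup>+v. ennreal (indicator {0<..z} v * fA a v) \<partial>lborel) = ennreal (gl a z)"
proof -
  have "(\<integral>\<^sup>+v. ennreal (indicator {0<..z} v * fA a v) \<partial>lborel) < top"
    using gl_nn_le[OF a, of z] by (simp add: le_less_trans)
  then show ?thesis unfolding gl_def by simp
qed

lemma gl_mono: assumes a: "0 < a" shows "mono (gl a)"
proof (rule monoI)
  fix z z' :: real assume "z \<le> z'"
  then have "(\<integral>\<^sup>+v. ennreal (indicator {0<..z} v * fA a v) \<partial>lborel) \<le> (\<integral>\<^sup>+v. ennreal (indicator {0<..z'} v * fA a v) \<partial>lborel)"
    by (intro nn_integral_mono ennreal_leI mult_right_mono) (auto simp: indicator_def fA_nonneg)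
  then show "gl a z \<le> gl a z'" using gl_nn[OF a, of z] gl_nn[OF a, of z'] gl_nonneg[of a z'] by (simp add: ennreal_le_iff)
qed

lemma c_eq:
  assumes a: "0 < a" and z: "0 \<le> z"
  shows "(LBINT v=ereal z..\<infinity>. v powr (a - 1) * exp (- v)) = Gamma a - gl a z"
proof -
  have "(LBINT v=ereal z..\<infinity>. v powr (a - 1) * exp (- v)) = (LBINT v:{z<..}. fA a v)"
    unfolding fA_def[abs_def] by (subst interval_integral_Ioi) auto
  also have "\<dots> = (\<integral>v. indicator {z<..} v * fA a v \<partial>lborel)"
    by (simp add: set_lebesgue_integral_def)
  also have "\<dots> = enn2real (\<integral>\<^sup>+v. ennreal (indicator {z<..} v * fA a v) \<partial>lborel)"
    by (rule integral_eq_nn_integral) (auto simp: fA_nonneg)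
  finally have c1: "(LBINT v=ereal z..\<infinity>. v powr (a - 1) * exp (- v)) = enn2real (\<integral>\<^sup>+v. ennreal (indicator {z<..} v * fA a v) \<partial>lborel)" .
  have split: "ennreal (indicator {0<..} v * fA a v) = ennreal (indicator {0<..z} v * fA a v) + ennreal (indicator {z<..} v * fA a v)" for v
    using z by (auto simp: indicator_def fA_nonneg)
  have "ennreal (Gamma a) = (\<integral>\<^sup>+v. ennreal (indicator {0<..z} v * fA a v) \<partial>lborel) + (\<integral>\<^sup>+v. ennreal (indicator {z<..} v * fA a v) \<partial>lborel)"
    unfolding Gam_nn[OF a, symmetric] split by (rule nn_integral_add) auto
  then have "ennreal (Gamma a) = ennreal (gl a z) + (\<integral>\<^sup>+v. ennreal (indicator {z<..} v * fA a v) \<partial>lborel)"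
    using gl_nn[OF a] by simp
  moreover define X where "X = (\<integral>\<^sup>+v. ennreal (indicator {z<..} v * fA a v) \<partial>lborel)"
  ultimately have GX: "ennreal (Gamma a) = ennreal (gl a z) + X" by simp
  then have "X \<noteq> top" by (metis ennreal_neq_top top_neq_ennreal ennreal_add_eq_top)
  then have "X = ennreal (enn2real X)" by (simp add: ennreal_enn2real_if)
  with GX have "ennreal (Gamma a) = ennreal (gl a z + enn2real X)"
    by (simp add: ennreal_plus gl_nonneg)
  then have "Gamma a = gl a z + enn2real X"
    using Gamma_real_pos[OF a] gl_nonneg[of a z]
    by (subst (asm) ennreal_inj) (auto intro: add_nonneg_nonneg)
  then show ?thesis using c1 X_def by simp
qed

lemma trunc_scale:
  assumes a: "0 < a" and b: "0 < b"
  shows "(\<integral>\<^sup>+s. ennreal (indicator {0<..<L} s * (s powr (a - 1) * exp (- (b * s)))) \<partial>lborel)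
       = ennreal (b powr (- a) * gl a (b * L))"
proof -
  have "(\<integral>\<^sup>+s. ennreal (indicator {0<..<L} s * (s powr (a - 1) * exp (- (b * s)))) \<partial>lborel)
     = ennreal (b powr (- a)) * (\<integral>\<^sup>+v. ennreal (indicator {0<..<b * L} v * fA a v) \<partial>lborel)"
  proof (rule scale_pow[OF b])
    fix s :: real
    show "indicator {0<..<b * L} (b * s) * fA a (b * s) = b powr (a - 1) * (indicator {0<..<L} s * (s powr (a - 1) * exp (- (b * s))))"
      using b by (auto simp: indicator_def fA_def powr_mult zero_less_mult_iff)
  qed (auto simp: fA_def)
  also have "(\<integral>\<^sup>+v. ennreal (indicator {0<..<b * L} v * fA a v) \<partial>lborel) = (\<integral>\<^sup>+v. ennreal (indicator {0<..b * L} v * fA a v) \<partial>lborel)"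
  proof (rule nn_integral_cong_AE)
    show "AE v in lborel. ennreal (indicator {0<..<b * L} v * fA a v) = ennreal (indicator {0<..b * L} v * fA a v)"
      using AE_lborel_singleton[of "b * L"] by eventually_elim (auto simp: indicator_def)
  qed
  also have "\<dots> = ennreal (gl a (b * L))" by (rule gl_nn[OF a])
  finally show ?thesis using b by (simp add: ennreal_mult'' gl_nonneg)
qed

lemma pmf_count_meas: "(\<lambda>k. k) \<in> measure_pmf p \<rightarrow>\<^sub>M count_space UNIV"
  by (simp add: measurable_def)

lemma pgf_meas[measurable]: "pgf p \<in> borel_measurable borel"
proof -
  have j: "(\<lambda>z::real \<times> nat. fst z ^ snd z) \<in> borel_measurable (borel \<Otimes>\<^sub>M measure_pmf p)"
  proof -
    have "(\<lambda>z::real \<times> nat. (\<lambda>n z. fst z ^ n) (snd z) z) \<in> borel_measurable (borel \<Otimes>\<^sub>M measure_pmf p)"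
    proof (rule measurable_compose_countable)
      fix n :: nat show "(\<lambda>z::real \<times> nat. fst z ^ n) \<in> borel_measurable (borel \<Otimes>\<^sub>M measure_pmf p)" by measurable
      show "snd \<in> borel \<Otimes>\<^sub>M measure_pmf p \<rightarrow>\<^sub>M count_space UNIV"
        using measurable_compose[OF measurable_snd pmf_count_meas] by simp
    qed
    then show ?thesis by simp
  qed
  have "(\<lambda>\<eta>::real. \<integral>k. \<eta> ^ k \<partial>measure_pmf p) \<in> borel_measurable borel"
    by (rule measure_pmf.borel_measurable_lebesgue_integral[where f="\<lambda>\<eta> k. \<eta> ^ k" and N=borel]) (use j in \<open>simp add: case_prod_beta'\<close>)
  then show ?thesis by (simp add: pgf_def[abs_def])
qed

lemma L_meas[measurable]: "(\<lambda>\<eta>. ln (gw_R p \<eta>)) \<in> borel_measurable borel"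
  unfolding gw_R_def by measurable

lemma hx_joint_meas:
  "(\<lambda>z. hx (exp (- snd z)) (fst z)) \<in> borel_measurable (gw_space p \<Otimes>\<^sub>M lborel)"
proof -
  have "(\<lambda>z. if finite (gw_tree (fst z)) then (\<lambda>n z. exp (- snd z) ^ n) (card (gw_tree (fst z))) z else 0)
     \<in> borel_measurable (gw_space p \<Otimes>\<^sub>M (lborel::real measure))"
    by (rule meas_fin_card[where p=p and \<pi>=fst and G="\<lambda>n z. exp (- snd z) ^ n"]) auto
  then show ?thesis by (simp add: hx_def)
qed

lemma step1:
  assumes a: "0 < a" and b: "0 < b"
  shows "ennreal (Gamma a * (if finite (gw_tree \<omega>) then (real (card (gw_tree \<omega>)) - 1 + (b + 1)) powr (- a) else 0))
    = (\<integral>\<^sup>+s. ennreal (indicator {0<..} s * (s powr (a - 1) * exp (- (b * s))) * hx (exp (- s)) \<omega>) \<partial>lborel)"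
proof (cases "finite (gw_tree \<omega>)")
  case True
  define n where "n = card (gw_tree \<omega>)"
  have "indicator {0<..} s * (s powr (a - 1) * exp (- (b * s))) * hx (exp (- s)) \<omega>
      = indicator {0<..} s * (s powr (a - 1) * exp (- ((b + real n) * s)))" for s
  proof -
    have e: "exp (- (b * s)) * exp (- s) ^ n = exp (- ((b + real n) * s))"
      by (simp add: exp_of_nat_mult[symmetric] exp_add[symmetric] algebra_simps)
    have "hx (exp (- s)) \<omega> = exp (- s) ^ n" using True by (simp add: hx_def n_def)
    then show ?thesis by (simp only: e[symmetric])
  qed
  note pw = this
  have "(\<integral>\<^sup>+s. ennreal (indicator {0<..} s * (s powr (a - 1) * exp (- (b * s))) * hx (exp (- s)) \<omega>) \<partial>lborel)
     = (\<integral>\<^sup>+s. ennreal (indicator {0<..} s * (s powr (a - 1) * exp (- ((b + real n) * s)))) \<partial>lborel)"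
    by (simp only: pw)
  also have "\<dots> = ennreal (Gamma a * (b + real n) powr (- a))"
    using b by (intro Gam_scale[OF a]) simp
  finally have "(\<integral>\<^sup>+s. ennreal (indicator {0<..} s * (s powr (a - 1) * exp (- (b * s))) * hx (exp (- s)) \<omega>) \<partial>lborel)
     = ennreal (Gamma a * (b + real n) powr (- a))" .
  then show ?thesis using True by (simp add: n_def[symmetric] algebra_simps)
next
  case False
  then show ?thesis by (simp add: hx_def)
qed

lemma L_iff:
  assumes A1: "integrable (measure_pmf p) real"
    and A2: "measure_pmf.expectation p real = 1"
    and eta: "0 < \<eta>" "\<eta> \<le> 1"
  shows "s < ln (gw_R p \<eta>) \<longleftrightarrow> \<eta> < exp (- s) * pgf p \<eta>"
proof -
  have pg: "\<eta> \<le> pgf p \<eta>" using pgf_ge[OF A1 A2] eta by simp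
  then have Rpos: "0 < gw_R p \<eta>" using eta by (simp add: gw_R_def)
  have "s < ln (gw_R p \<eta>) \<longleftrightarrow> ln (exp s) < ln (gw_R p \<eta>)" by simp
  also have "\<dots> \<longleftrightarrow> exp s < gw_R p \<eta>" using Rpos by (rule ln_less_cancel_iff[OF exp_gt_zero])
  also have "\<dots> \<longleftrightarrow> exp s * \<eta> < pgf p \<eta>" using eta by (simp add: gw_R_def pos_less_divide_eq)
  also have "\<dots> \<longleftrightarrow> \<eta> < exp (- s) * pgf p \<eta>"
  proof -
    have "exp (- s) * (exp s * \<eta>) = \<eta>" by (simp add: exp_minus field_simps)
    then show ?thesis
      by (metis exp_gt_zero mult_less_cancel_left_pos)
  qed
  finally show ?thesis .
qed

lemma Fr_as_measure:
  assumes A1: "integrable (measure_pmf p) real"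
    and A2: "measure_pmf.expectation p real = 1"
    and A3: "measure_pmf.variance p real > 0"
    and s: "0 < s"
  shows "ennreal (Fr p (exp (- s))) = (\<integral>\<^sup>+\<eta>. ennreal (indicator {0<..1} \<eta> * indicator {\<eta>. s < ln (gw_R p \<eta>)} \<eta>) \<partial>lborel)"
proof -
  define S where "S = {\<eta>\<in>{0<..1}. s < ln (gw_R p \<eta>)}"
  have Sm: "S \<in> sets lborel" unfolding S_def by measurable
  have "S = {\<eta>\<in>{0<..1}. \<eta> < exp (- s) * pgf p \<eta>}"
    unfolding S_def using L_iff[OF A1 A2] by auto
  also have "\<dots> = {0<..<Fr p (exp (- s))}"
    by (rule root_set[OF A1 A2 A3]) (use s in auto)
  finally have SF: "S = {0<..<Fr p (exp (- s))}" .
  have F0: "0 \<le> Fr p (exp (- s))" using Fr_bounds[of "exp (- s)" p] s by simp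
  have "(\<lambda>\<eta>. ennreal (indicator {0<..1} \<eta> * indicator {\<eta>. s < ln (gw_R p \<eta>)} \<eta>)) = indicator S"
    by (auto simp: fun_eq_iff S_def indicator_def)
  then have "(\<integral>\<^sup>+\<eta>. ennreal (indicator {0<..1} \<eta> * indicator {\<eta>. s < ln (gw_R p \<eta>)} \<eta>) \<partial>lborel) = emeasure lborel S"
    using Sm by simp
  also have "\<dots> = ennreal (Fr p (exp (- s)))" using SF F0 by simp
  finally show ?thesis by simp
qed

lemma star:
  assumes A1: "integrable (measure_pmf p) real"
    and A2: "measure_pmf.expectation p real = 1"
    and A3: "measure_pmf.variance p real > 0"
    and a: "0 < a" and b: "0 < b"
  shows "(\<integral>\<^sup>+\<omega>. ennreal (Gamma a * (if finite (gw_tree \<omega>) then (real (card (gw_tree \<omega>)) - 1 + (b + 1)) powr (- a) else 0)) \<partial>gw_space p)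
    = (\<integral>\<^sup>+\<eta>. ennreal (indicator {0<..1} \<eta> * (b powr (- a) * gl a (b * ln (gw_R p \<eta>)))) \<partial>lborel)"
proof -
  define W where "W = (\<lambda>s::real. indicator {0<..} s * (s powr (a - 1) * exp (- (b * s))))"
  have Wm[measurable]: "W \<in> borel_measurable borel" unfolding W_def by measurable
  have W0: "0 \<le> W s" for s unfolding W_def by simp
  have Wneg: "W s = 0" if "\<not> 0 < s" for s unfolding W_def using that by simp
  interpret P: pair_sigma_finite "gw_space p" "lborel :: real measure"
    by (intro pair_sigma_finite.intro prob_space_imp_sigma_finite prob_gw sigma_finite_lborel)
  have jm: "case_prod (\<lambda>\<omega> s. ennreal (W s * hx (exp (- s)) \<omega>)) \<in> borel_measurable (gw_space p \<Otimes>\<^sub>M lborel)"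
  proof -
    have "(\<lambda>z. ennreal (W (snd z) * hx (exp (- snd z)) (fst z))) \<in> borel_measurable (gw_space p \<Otimes>\<^sub>M lborel)"
      using hx_joint_meas[of p] by measurable
    then show ?thesis by (simp add: case_prod_beta')
  qed
  have "(\<integral>\<^sup>+\<omega>. ennreal (Gamma a * (if finite (gw_tree \<omega>) then (real (card (gw_tree \<omega>)) - 1 + (b + 1)) powr (- a) else 0)) \<partial>gw_space p)
      = (\<integral>\<^sup>+\<omega>. (\<integral>\<^sup>+s. ennreal (W s * hx (exp (- s)) \<omega>) \<partial>lborel) \<partial>gw_space p)"
    unfolding W_def by (simp only: step1[OF a b])
  also have "\<dots> = (\<integral>\<^sup>+s. (\<integral>\<^sup>+\<omega>. ennreal (W s * hx (exp (- s)) \<omega>) \<partial>gw_space p) \<partial>lborel)"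
    by (rule P.Fubini'[OF jm, symmetric])
  also have "\<dots> = (\<integral>\<^sup>+s. ennreal (W s) * (\<integral>\<^sup>+\<eta>. ennreal (indicator {0<..1} \<eta> * indicator {\<eta>. s < ln (gw_R p \<eta>)} \<eta>) \<partial>lborel) \<partial>lborel)"
  proof (rule nn_integral_cong)
    fix s :: real
    show "(\<integral>\<^sup>+\<omega>. ennreal (W s * hx (exp (- s)) \<omega>) \<partial>gw_space p)
       = ennreal (W s) * (\<integral>\<^sup>+\<eta>. ennreal (indicator {0<..1} \<eta> * indicator {\<eta>. s < ln (gw_R p \<eta>)} \<eta>) \<partial>lborel)"
    proof (cases "0 < s")
      case True
      have "(\<integral>\<^sup>+\<omega>. ennreal (W s * hx (exp (- s)) \<omega>) \<partial>gw_space p) = ennreal (W s) * (\<integral>\<^sup>+\<omega>. ennreal (hx (exp (- s)) \<omega>) \<partial>gw_space p)"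
        by (simp add: ennreal_mult' W0 nn_integral_cmult)
      also have "\<dots> = ennreal (W s) * ennreal (Fr p (exp (- s)))"
        using True by (simp add: Fr_nn)
      also have "\<dots> = ennreal (W s) * (\<integral>\<^sup>+\<eta>. ennreal (indicator {0<..1} \<eta> * indicator {\<eta>. s < ln (gw_R p \<eta>)} \<eta>) \<partial>lborel)"
        by (simp only: Fr_as_measure[OF A1 A2 A3 True])
      finally show ?thesis .
    next
      case False
      then show ?thesis by (simp add: Wneg)
    qed
  qed
  also have "\<dots> = (\<integral>\<^sup>+s. (\<integral>\<^sup>+\<eta>. ennreal (W s * (indicator {0<..1} \<eta> * indicator {\<eta>. s < ln (gw_R p \<eta>)} \<eta>)) \<partial>lborel) \<partial>lborel)"
    by (rule nn_integral_cong) (simp add: ennreal_mult' W0 nn_integral_cmult)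
  also have "\<dots> = (\<integral>\<^sup>+\<eta>. (\<integral>\<^sup>+s. ennreal (W s * (indicator {0<..1} \<eta> * indicator {\<eta>. s < ln (gw_R p \<eta>)} \<eta>)) \<partial>lborel) \<partial>lborel)"
  proof (rule lborel_pair.Fubini')
    have "(\<lambda>z::real \<times> real. ennreal (W (snd z) * (indicator {0<..1} (fst z) * indicator {z. snd z < ln (gw_R p (fst z))} z)))
       \<in> borel_measurable (lborel \<Otimes>\<^sub>M lborel)"
      by measurable
    then show "case_prod (\<lambda>\<eta> s. ennreal (W s * (indicator {0<..1} \<eta> * indicator {\<eta>. s < ln (gw_R p \<eta>)} \<eta>))) \<in> borel_measurable (lborel \<Otimes>\<^sub>M lborel)"
      by (simp add: case_prod_beta' indicator_def)
  qed
  also have "\<dots> = (\<integral>\<^sup>+\<eta>. ennreal (indicator {0<..1} \<eta> * (b powr (- a) * gl a (b * ln (gw_R p \<eta>)))) \<partial>lborel)"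
  proof (rule nn_integral_cong)
    fix \<eta> :: real
    show "(\<integral>\<^sup>+s. ennreal (W s * (indicator {0<..1} \<eta> * indicator {\<eta>. s < ln (gw_R p \<eta>)} \<eta>)) \<partial>lborel)
        = ennreal (indicator {0<..1} \<eta> * (b powr (- a) * gl a (b * ln (gw_R p \<eta>))))"
    proof (cases "\<eta> \<in> {0<..1}")
      case True
      have "(\<lambda>s. ennreal (W s * (indicator {0<..1} \<eta> * indicator {\<eta>. s < ln (gw_R p \<eta>)} \<eta>)))
          = (\<lambda>s. ennreal (indicator {0<..<ln (gw_R p \<eta>)} s * (s powr (a - 1) * exp (- (b * s)))))"
        using True by (auto simp: fun_eq_iff W_def indicator_def)
      then show ?thesis using True by (simp add: trunc_scale[OF a b])
    next
      case False
      then show ?thesis by simp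
    qed
  qed
  finally show ?thesis .
qed

theorem theoremB1:
  fixes p :: "nat pmf" and \<alpha> t :: real
  assumes "integrable (measure_pmf p) real"
    and "measure_pmf.expectation p real = 1"
    and "integrable (measure_pmf p) (\<lambda>k. (real k)^2)"
    and "measure_pmf.variance p real > 0"
    and "\<alpha> < 0" and "t > 1"
  shows "(\<integral>\<omega>. (if finite (gw_tree \<omega>)
                  then (real (card (gw_tree \<omega>)) - 1 + t) powr \<alpha> else 0) \<partial>gw_space p)
       = (t - 1) powr \<alpha> * (LBINT \<eta>=0..1. 1 - gw_c p \<eta> (- \<alpha>) t / Gamma (- \<alpha>))"
proof -
  note A1 = assms(1) and A2 = assms(2) and A3 = assms(4)
  define a where "a = - \<alpha>"
  define b where "b = t - 1"
  have a: "0 < a" using assms(5) by (simp add: a_def)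
  have b: "0 < b" using assms(6) by (simp add: b_def)
  have Gpos: "0 < Gamma a" by (rule Gamma_real_pos[OF a])
  define G where "G = (\<lambda>\<omega>. if finite (gw_tree \<omega>) then (real (card (gw_tree \<omega>)) - 1 + t) powr \<alpha> else 0)"
  have Gm: "G \<in> borel_measurable (gw_space p)"
  proof -
    have "(\<lambda>\<omega>. if finite (gw_tree ((\<lambda>\<omega>. \<omega>) \<omega>)) then (\<lambda>n \<omega>. (real n - 1 + t) powr \<alpha>) (card (gw_tree ((\<lambda>\<omega>. \<omega>) \<omega>))) \<omega> else 0) \<in> gw_space p \<rightarrow>\<^sub>M borel"
      by (rule meas_fin_card[where p=p]) auto
    then show ?thesis by (simp add: G_def[abs_def])
  qed
  have G0: "0 \<le> G \<omega>" for \<omega> by (simp add: G_def)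
  define I where "I = (\<integral>\<^sup>+\<eta>. ennreal (indicator {0<..1} \<eta> * (b powr (- a) * gl a (b * ln (gw_R p \<eta>)))) \<partial>lborel)"
  have lhs: "(\<integral>\<omega>. G \<omega> \<partial>gw_space p) = enn2real (\<integral>\<^sup>+\<omega>. ennreal (G \<omega>) \<partial>gw_space p)"
    by (rule integral_eq_nn_integral) (auto simp: Gm G0)
  have "(\<integral>\<^sup>+\<omega>. ennreal (Gamma a * G \<omega>) \<partial>gw_space p) = I"
  proof -
    have bt: "b + 1 = t" by (simp add: b_def)
    have ma: "- a = \<alpha>" by (simp add: a_def)
    show ?thesis using star[OF A1 A2 A3 a b] unfolding I_def G_def bt ma .
  qed
  then have st: "ennreal (Gamma a) * (\<integral>\<^sup>+\<omega>. ennreal (G \<omega>) \<partial>gw_space p) = I"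
  proof -
    have Gm': "(\<lambda>\<omega>. ennreal (G \<omega>)) \<in> borel_measurable (gw_space p)" using Gm by measurable
    show ?thesis using Gpos \<open>(\<integral>\<^sup>+\<omega>. ennreal (Gamma a * G \<omega>) \<partial>gw_space p) = I\<close>
      by (simp add: ennreal_mult' nn_integral_cmult[OF Gm'])
  qed
  have inv: "ennreal (1 / Gamma a) * ennreal (Gamma a) = 1"
    using Gpos by (simp add: ennreal_mult'[symmetric])
  have "(\<integral>\<^sup>+\<omega>. ennreal (G \<omega>) \<partial>gw_space p) = ennreal (1 / Gamma a) * I"
    unfolding st[symmetric] mult.assoc[symmetric] inv by simp
  then have L: "(\<integral>\<omega>. G \<omega> \<partial>gw_space p) = 1 / Gamma a * enn2real I"
    using lhs Gpos by (simp add: enn2real_mult)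
  have Lnn: "0 \<le> ln (gw_R p \<eta>)" if "\<eta> \<in> {0<..1}" for \<eta>
  proof -
    have "\<eta> \<le> pgf p \<eta>" using pgf_ge[OF A1 A2] that by simp
    then have "1 \<le> gw_R p \<eta>" using that by (simp add: gw_R_def)
    then show ?thesis by simp
  qed
  have pw: "indicator {0<..1} \<eta> * (1 - gw_c p \<eta> (- \<alpha>) t / Gamma (- \<alpha>))
     = indicator {0<..1} \<eta> * (gl a (b * ln (gw_R p \<eta>)) / Gamma a)" for \<eta>
  proof (cases "\<eta> \<in> {0<..1}")
    case True
    have "gw_c p \<eta> (- \<alpha>) t = Gamma a - gl a (b * ln (gw_R p \<eta>))"
      unfolding gw_c_def a_def[symmetric] b_def[symmetric]
      by (rule c_eq[OF a]) (use b Lnn[OF True] in simp)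
    then show ?thesis using Gpos by (simp add: a_def[symmetric] diff_divide_distrib)
  qed simp
  have glm: "(\<lambda>\<eta>. gl a (b * ln (gw_R p \<eta>))) \<in> borel_measurable borel"
    using measurable_compose[OF _ borel_measurable_mono[OF gl_mono[OF a]], of "\<lambda>\<eta>. b * ln (gw_R p \<eta>)" borel]
    by simp
  have "(LBINT \<eta>=0..1. 1 - gw_c p \<eta> (- \<alpha>) t / Gamma (- \<alpha>))
      = (\<integral>\<eta>. indicator {0<..1} \<eta> * (1 - gw_c p \<eta> (- \<alpha>) t / Gamma (- \<alpha>)) \<partial>lborel)"
  proof -
    have "{x. (0::ereal) < ereal x \<and> ereal x \<le> 1} = {0<..1}" by auto
    then show ?thesis
      by (subst interval_integral_Ioc') (simp_all add: set_lebesgue_integral_def)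
  qed
  also have "\<dots> = (\<integral>\<eta>. indicator {0<..1} \<eta> * (gl a (b * ln (gw_R p \<eta>)) / Gamma a) \<partial>lborel)"
    by (simp only: pw)
  finally have R1: "(LBINT \<eta>=0..1. 1 - gw_c p \<eta> (- \<alpha>) t / Gamma (- \<alpha>))
      = (\<integral>\<eta>. indicator {0<..1} \<eta> * (gl a (b * ln (gw_R p \<eta>)) / Gamma a) \<partial>lborel)" .
  have "(t - 1) powr \<alpha> * (\<integral>\<eta>. indicator {0<..1} \<eta> * (gl a (b * ln (gw_R p \<eta>)) / Gamma a) \<partial>lborel)
      = (\<integral>\<eta>. (t - 1) powr \<alpha> * (indicator {0<..1} \<eta> * (gl a (b * ln (gw_R p \<eta>)) / Gamma a)) \<partial>lborel)"
    by (rule integral_mult_right_zero[symmetric])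
  also have "\<dots> = (\<integral>\<eta>. 1 / Gamma a * (indicator {0<..1} \<eta> * (b powr (- a) * gl a (b * ln (gw_R p \<eta>)))) \<partial>lborel)"
  proof (rule Bochner_Integration.integral_cong[OF refl])
    fix \<eta> :: real
    have cpow: "b powr (- a) = (t - 1) powr \<alpha>" by (simp add: a_def b_def)
    show "(t - 1) powr \<alpha> * (indicator {0<..1} \<eta> * (gl a (b * ln (gw_R p \<eta>)) / Gamma a))
        = 1 / Gamma a * (indicator {0<..1} \<eta> * (b powr (- a) * gl a (b * ln (gw_R p \<eta>))))"
      by (simp add: cpow divide_inverse mult_ac)
  qed
  also have "\<dots> = 1 / Gamma a * (\<integral>\<eta>. indicator {0<..1} \<eta> * (b powr (- a) * gl a (b * ln (gw_R p \<eta>))) \<partial>lborel)"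
    by (rule integral_mult_right_zero)
  also have "(\<integral>\<eta>. indicator {0<..1} \<eta> * (b powr (- a) * gl a (b * ln (gw_R p \<eta>))) \<partial>lborel) = enn2real I"
    unfolding I_def by (rule integral_eq_nn_integral) (use glm in \<open>auto simp: gl_nonneg\<close>)
  finally have R: "(t - 1) powr \<alpha> * (LBINT \<eta>=0..1. 1 - gw_c p \<eta> (- \<alpha>) t / Gamma (- \<alpha>)) = 1 / Gamma a * enn2real I"
    unfolding R1 .
  show ?thesis using L R unfolding G_def by simp
qed


end
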